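(* Fix an arbitrary integer load vector $x^{(0)}$ with discrepancy at most $K$, and a sequence of matchings. Consider two rounds $t_1 \leq t_2$ and assume that the time-interval $[0,t_1]$ is $(K,1/(2n))$-smoothing. Then for any node $k\in V$ and $\delta>1/n$, \[ \Pr\left[ \left|\sum_{w\in V} x_w^{(t_1)} \mathbf{M}^{[t_1+1,t_2]}_{w,k} - \overline{x} \right|\geq\delta \right]\leq2 \exp\left( -\frac{(\delta - 1/(2n) )^2}{4 \sum_{w\in V} \left( \mathbf{M}^{[t_1+1,t_2]}_{w,k} -1/n\right)^2}\right). \] In particular, for any node $w\in V$ and $\delta>1/n$, \[ \Pr\left[ \left|x_w^{(t_1)} - \overline{x} \right|\geq\delta \right]\leq2 \exp\left( -\left(\delta - \tfrac{1}{2n} \right)^2\big/ 4 \right). \]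
   Context: $G=(V,E)$ has $n$ nodes. A matching $\mathbf{M}^{(t)}\subseteq E$ is identified with the symmetric matrix with entries $1/2$ on $(u,u),(v,v),(u,v),(v,u)$ for $\{u,v\}\in\mathbf{M}^{(t)}$, $1$ on the diagonal for unmatched nodes, $0$ elsewhere; $\mathbf{M}^{[a,b]}=\prod_{s=a}^b\mathbf{M}^{(s)}$ (identity if $a>b$). Discrete protocol: in round $t$, for each $\{u,v\}\in\mathbf{M}^{(t)}$ both nodes get $\lfloor (x^{(t-1)}_u+x^{(t-1)}_v)/2\rfloor$ tokens and an excess token (if the sum is odd) goes to $u$ or $v$ with probability $1/2$ each, independently; unmatched nodes keep their load. $\overline{x}=\frac1n\sum_w x^{(0)}_w$. The continuous process is $\xi^{(t)}=\xi^{(t-1)}\mathbf{M}^{(t)}$. The interval $[t_1,t_2]$ is $(K,\epsilon)$-smoothing if every $\xi^{(t_1)}\in\mathbb{R}^n$ with discrepancy $\max_{u,v}|\xi_u-\xi_v|\le K$ yields $\xi^{(t_2)}$ with discrepancy at most $\epsilon$. Probabilities are over the random orientations. *)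

theory Defs
  imports "HOL-Probability.Probability"
begin

text \<open>Nodes are the elements of a finite type 'v; n = CARD('v).
  A matching in round t is given as a set of ordered pairs (u,v); the pair (u,v)
  represents the edge {u,v}, and the order only serves to index the random
  orientation bit of that edge.\<close>

definition is_matching :: "('v \<times> 'v) set \<Rightarrow> ('v \<times> 'v) set \<Rightarrow> bool" where
  "is_matching E Mt \<longleftrightarrow> Mt \<subseteq> E \<and> (\<forall>(u,v)\<in>Mt. u \<noteq> v) \<and>
     (\<forall>(u,v)\<in>Mt. \<forall>(u',v')\<in>Mt. {u,v} \<inter> {u',v'} \<noteq> {} \<longrightarrow> (u,v) = (u',v'))"

definition is_graph :: "('v \<times> 'v) set \<Rightarrow> bool" where
  "is_graph E \<longleftrightarrow> (\<forall>(u,v)\<in>E. u \<noteq> v \<and> (v,u) \<in> E)"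

definition matched :: "('v \<times> 'v) set \<Rightarrow> 'v \<Rightarrow> bool" where
  "matched Mt u \<longleftrightarrow> (\<exists>v. (u,v) \<in> Mt \<or> (v,u) \<in> Mt)"

definition Mmat :: "(nat \<Rightarrow> ('v \<times> 'v) set) \<Rightarrow> nat \<Rightarrow> 'v \<Rightarrow> 'v \<Rightarrow> real" where
  "Mmat M t u v =
     (if u = v then (if matched (M t) u then 1/2 else 1)
      else if (u,v) \<in> M t \<or> (v,u) \<in> M t then 1/2 else 0)"

definition idm :: "'v \<Rightarrow> 'v \<Rightarrow> real" where
  "idm u v = (if u = v then 1 else 0)"

definition matmul :: "('v::finite \<Rightarrow> 'v \<Rightarrow> real) \<Rightarrow> ('v \<Rightarrow> 'v \<Rightarrow> real) \<Rightarrow> 'v \<Rightarrow> 'v \<Rightarrow> real" where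
  "matmul A B i j = (\<Sum>k\<in>UNIV. A i k * B k j)"

text \<open>M^[a,b] = M^(a) M^(a+1) ... M^(b); identity if a > b.\<close>
definition Mprod :: "(nat \<Rightarrow> ('v::finite \<times> 'v) set) \<Rightarrow> nat \<Rightarrow> nat \<Rightarrow> 'v \<Rightarrow> 'v \<Rightarrow> real" where
  "Mprod M a b = foldl (\<lambda>A s. matmul A (Mmat M s)) idm [a..<Suc b]"

definition vecmat :: "('v::finite \<Rightarrow> real) \<Rightarrow> ('v \<Rightarrow> 'v \<Rightarrow> real) \<Rightarrow> 'v \<Rightarrow> real" where
  "vecmat xi A v = (\<Sum>u\<in>UNIV. xi u * A u v)"

definition discrepancy :: "('v::finite \<Rightarrow> real) \<Rightarrow> real" where
  "discrepancy xi = Max {\<bar>xi u - xi v\<bar> | u v. True}"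

text \<open>[t1,t2] is (K,eps)-smoothing: xi^(t2) = xi^(t1) M^[t1+1,t2].\<close>
definition smoothing :: "(nat \<Rightarrow> ('v::finite \<times> 'v) set) \<Rightarrow> real \<Rightarrow> real \<Rightarrow> nat \<Rightarrow> nat \<Rightarrow> bool" where
  "smoothing M K eps t1 t2 \<longleftrightarrow>
     (\<forall>xi. discrepancy xi \<le> K \<longrightarrow> discrepancy (vecmat xi (Mprod M (Suc t1) t2)) \<le> eps)"

text \<open>Discrete step in round t with orientation bits b: for an edge (u,v) in M t the
  excess token goes to u if b (t,u) and to v otherwise. Floor of s/2 is s div 2.\<close>
definition disc_step :: "(nat \<Rightarrow> ('v \<times> 'v) set) \<Rightarrow> nat \<Rightarrow> (nat \<times> 'v \<Rightarrow> bool) \<Rightarrow> ('v \<Rightarrow> int) \<Rightarrow> 'v \<Rightarrow> int" where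
  "disc_step M t b x w =
     (if \<exists>v. (w,v) \<in> M t then
        (let v = (THE v. (w,v) \<in> M t); s = x w + x v in s div 2 + (if odd s \<and> b (t,w) then 1 else 0))
      else if \<exists>u. (u,w) \<in> M t then
        (let u = (THE u. (u,w) \<in> M t); s = x u + x w in s div 2 + (if odd s \<and> \<not> b (t,u) then 1 else 0))
      else x w)"

primrec load :: "(nat \<Rightarrow> ('v \<times> 'v) set) \<Rightarrow> (nat \<times> 'v \<Rightarrow> bool) \<Rightarrow> ('v \<Rightarrow> int) \<Rightarrow> nat \<Rightarrow> 'v \<Rightarrow> int" where
  "load M b x0 0 = x0"
| "load M b x0 (Suc t) = disc_step M (Suc t) b (load M b x0 t)"

text \<open>Independent fair orientation bits for rounds 1..T (one per edge, indexed by the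
  first component of the edge; bits at other indices are irrelevant).\<close>
definition orient_pmf :: "nat \<Rightarrow> (nat \<times> 'v::finite \<Rightarrow> bool) pmf" where
  "orient_pmf T = Pi_pmf ({1..T} \<times> UNIV) False (\<lambda>_. bernoulli_pmf (1/2))"

end

theory Submission
  imports Defs
begin

definition first :: "('v \<times> 'v) set \<Rightarrow> 'v \<Rightarrow> bool" where
  "first Mt u \<longleftrightarrow> (\<exists>v. (u,v) \<in> Mt)"
definition second :: "('v \<times> 'v) set \<Rightarrow> 'v \<Rightarrow> bool" where
  "second Mt u \<longleftrightarrow> (\<exists>v. (v,u) \<in> Mt)"
definition partner :: "('v \<times> 'v) set \<Rightarrow> 'v \<Rightarrow> 'v" where
  "partner Mt w = (if \<exists>v. (w,v) \<in> Mt then (THE v. (w,v) \<in> Mt)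
     else if \<exists>u. (u,w) \<in> Mt then (THE u. (u,w) \<in> Mt) else w)"

lemma ball_prod: "\<forall>(u,v)\<in>A. P u v \<Longrightarrow> (a,b)\<in>A \<Longrightarrow> P a b" by auto

context fixes E Mt assumes mt: "is_matching E Mt"
begin

lemma m_ne: "(u,v) \<in> Mt \<Longrightarrow> u \<noteq> v"
  using mt unfolding is_matching_def by auto

lemma m_eq: "(u,v) \<in> Mt \<Longrightarrow> (u',v') \<in> Mt \<Longrightarrow> {u,v} \<inter> {u',v'} \<noteq> {} \<Longrightarrow> u = u' \<and> v = v'"
proof -
  have H: "\<forall>(u,v)\<in>Mt. \<forall>(u',v')\<in>Mt. {u,v} \<inter> {u',v'} \<noteq> {} \<longrightarrow> (u,v) = (u',v')"
    using mt unfolding is_matching_def by (rule conjunct2[THEN conjunct2])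
  assume a: "(u,v) \<in> Mt" "(u',v') \<in> Mt" "{u,v} \<inter> {u',v'} \<noteq> {}"
  have "(u,v) = (u',v')" using ball_prod[OF ball_prod[OF H a(1)] a(2)] a(3) by (rule mp)
  thus ?thesis by simp
qed
lemma m_fst_unique: "(u,v) \<in> Mt \<Longrightarrow> (u,v') \<in> Mt \<Longrightarrow> v = v'"
  using m_eq[of u v u v'] by blast
lemma m_snd_unique: "(u,v) \<in> Mt \<Longrightarrow> (u',v) \<in> Mt \<Longrightarrow> u = u'"
  using m_eq[of u v u' v] by blast
lemma m_no_both: "(u,v) \<in> Mt \<Longrightarrow> (w,u) \<notin> Mt"
  using m_eq[of u v w u] m_ne[of u v] by blast

lemma partner_edge1: "(u,v) \<in> Mt \<Longrightarrow> partner Mt u = v"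
  unfolding partner_def using m_fst_unique by (auto intro!: the_equality)
lemma partner_edge2: "(u,v) \<in> Mt \<Longrightarrow> partner Mt v = u"
proof -
  assume h: "(u,v) \<in> Mt"
  hence "\<not> (\<exists>x. (v,x) \<in> Mt)" using m_no_both by blast
  moreover have "(THE x. (x,v) \<in> Mt) = u" using h m_snd_unique by (intro the_equality) blast+
  ultimately show ?thesis unfolding partner_def using h by auto
qed

lemma first_partner: "first Mt u \<Longrightarrow> (u, partner Mt u) \<in> Mt"
  unfolding first_def using partner_edge1 by blast
lemma second_partner: "second Mt u \<Longrightarrow> (partner Mt u, u) \<in> Mt"
  unfolding second_def using partner_edge2 by blast
lemma first_not_second: "first Mt u \<Longrightarrow> \<not> second Mt u"
  unfolding first_def second_def using m_no_both by blast
lemma matched_iff: "matched Mt u \<longleftrightarrow> first Mt u \<or> second Mt u"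
  unfolding matched_def first_def second_def by blast
lemma partner_unmatched: "\<not> matched Mt w \<Longrightarrow> partner Mt w = w"
  unfolding partner_def matched_def by auto
lemma partner_invol: "partner Mt (partner Mt w) = w"
proof (cases "first Mt w")
  case True thus ?thesis using first_partner partner_edge2 by blast
next
  case False
  show ?thesis
  proof (cases "second Mt w")
    case True thus ?thesis using second_partner partner_edge1 by blast
  next
    case False
    with \<open>\<not> first Mt w\<close> have "\<not> matched Mt w" using matched_iff by blast
    thus ?thesis using partner_unmatched by simp
  qed
qed
lemma second_partner_iff: "second Mt (partner Mt u) \<longleftrightarrow> first Mt u"
proof
  assume "second Mt (partner Mt u)"
  hence "(partner Mt (partner Mt u), partner Mt u) \<in> Mt" by (rule second_partner)
  hence "(u, partner Mt u) \<in> Mt" by (simp add: partner_invol)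
  thus "first Mt u" unfolding first_def by blast
next
  assume "first Mt u"
  hence "(u, partner Mt u) \<in> Mt" by (rule first_partner)
  thus "second Mt (partner Mt u)" unfolding second_def by blast
qed
lemma first_partner_iff: "first Mt (partner Mt u) \<longleftrightarrow> second Mt u"
  using second_partner_iff[of "partner Mt u"] by (simp add: partner_invol)
lemma matched_partner: "matched Mt (partner Mt u) \<longleftrightarrow> matched Mt u"
  using matched_iff first_partner_iff second_partner_iff by blast
lemma matched_partner_ne: "matched Mt u \<Longrightarrow> partner Mt u \<noteq> u"
proof -
  assume "matched Mt u"
  hence "first Mt u \<or> second Mt u" using matched_iff by blast
  thus ?thesis
  proof
    assume "first Mt u" thus ?thesis using first_partner[of u] m_ne by fastforce
  next
    assume "second Mt u" thus ?thesis using second_partner[of u] m_ne by fastforce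
  qed
qed
lemma edge_iff: "u \<noteq> v \<Longrightarrow> ((u,v) \<in> Mt \<or> (v,u) \<in> Mt) \<longleftrightarrow> (matched Mt u \<and> v = partner Mt u)"
proof -
  assume "u \<noteq> v"
  have 1: "matched Mt u \<and> v = partner Mt u" if "(u,v) \<in> Mt \<or> (v,u) \<in> Mt"
    using that partner_edge1 partner_edge2 unfolding matched_def by blast
  have 2: "(u,v) \<in> Mt \<or> (v,u) \<in> Mt" if "matched Mt u" "v = partner Mt u"
    using that matched_iff first_partner second_partner by blast
  show ?thesis using 1 2 by blast
qed

lemma sum_partner: "(\<Sum>w\<in>UNIV. f (partner Mt w)) = (\<Sum>w\<in>UNIV. (f w :: real))"
proof -
  have inj: "inj (partner Mt)" by (metis injI partner_invol)
  have "surj (partner Mt)" by (metis partner_invol surjI)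
  hence "(\<Sum>w\<in>UNIV. f w) = (\<Sum>w\<in>partner Mt ` UNIV. f w)" by simp
  also have "\<dots> = (\<Sum>w\<in>UNIV. f (partner Mt w))" using inj by (simp add: sum.reindex)
  finally show ?thesis by simp
qed

end

lemma Mmat_partner:
  assumes "is_matching E (M t)"
  shows "Mmat M t u v = (if matched (M t) u then (if v = u \<or> v = partner (M t) u then 1/2 else 0)
                       else (if u = v then 1 else 0))"
  using edge_iff[OF assms, of u v] matched_partner_ne[OF assms, of u]
  unfolding Mmat_def by (auto simp: partner_unmatched[OF assms])

lemma Mmat_sym: "Mmat M t u v = Mmat M t v u"
  unfolding Mmat_def by auto

lemma sum_Mmat:
  fixes M :: "nat \<Rightarrow> ('v::finite \<times> 'v) set"
  assumes "is_matching E (M t)"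
  shows "(\<Sum>v\<in>UNIV. Mmat M t u v * f v) =
    (if matched (M t) u then (f u + f (partner (M t) u)) / 2 else f u)"
proof (cases "matched (M t) u")
  case True
  hence ne: "partner (M t) u \<noteq> u" using matched_partner_ne[OF assms] by blast
  have "(\<Sum>v\<in>UNIV. Mmat M t u v * f v) = (\<Sum>v\<in>UNIV. (if v = u then f u / 2 else 0) + (if v = partner (M t) u then f (partner (M t) u) / 2 else 0))"
    using ne True by (intro sum.cong) (auto simp: Mmat_partner[of E M t, OF assms])
  also have "\<dots> = (f u + f (partner (M t) u)) / 2" by (simp only: sum.distrib sum.delta finite UNIV_I if_True) simp
  finally show ?thesis using True by simp
next
  case False
  have "(\<Sum>v\<in>UNIV. Mmat M t u v * f v) = (\<Sum>v\<in>UNIV. (if v = u then f u else 0))"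
    using False by (intro sum.cong) (auto simp: Mmat_partner[of E M t, OF assms])
  thus ?thesis using False by simp
qed

lemma matmul_assoc: "matmul (matmul A B) C = matmul A (matmul B C)"
  unfolding matmul_def by (auto simp: fun_eq_iff sum_distrib_left sum_distrib_right mult.assoc intro: sum.swap[THEN trans])

lemma sum_delta_l: "(\<Sum>k\<in>(UNIV::'v::finite set). (if x = k then 1 else 0) * f k) = (f x :: real)"
proof -
  have "(\<Sum>k\<in>(UNIV::'v set). (if x = k then 1 else 0) * f k) = (\<Sum>k\<in>UNIV. if x = k then f k else 0)"
    by (intro sum.cong) auto
  thus ?thesis by simp
qed
lemma sum_delta_r: "(\<Sum>k\<in>(UNIV::'v::finite set). f k * (if k = x then 1 else 0)) = (f x :: real)"
proof -
  have "(\<Sum>k\<in>(UNIV::'v set). f k * (if k = x then 1 else 0)) = (\<Sum>k\<in>UNIV. if k = x then f k else 0)"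
    by (intro sum.cong) auto
  thus ?thesis by simp
qed

lemma matmul_idm_left [simp]: "matmul idm A = A"
  unfolding matmul_def idm_def by (simp add: fun_eq_iff sum_delta_l)

lemma foldl_Mmat: "foldl (\<lambda>A s. matmul A (Mmat M s)) A xs = matmul A (foldl (\<lambda>A s. matmul A (Mmat M s)) idm xs)"
proof (induction xs arbitrary: A)
  case Nil
  show ?case unfolding matmul_def idm_def by (simp add: fun_eq_iff sum_delta_r)
next
  case (Cons x xs)
  show ?case by (simp add: Cons.IH[of "matmul A (Mmat M x)"] Cons.IH[of "Mmat M x"] matmul_assoc)
qed

lemma Mprod_split:
  assumes "a \<le> Suc b" "b \<le> c"
  shows "Mprod M a c = matmul (Mprod M a b) (Mprod M (Suc b) c)"
proof -
  have "[a..<Suc c] = [a..<Suc b] @ [Suc b..<Suc c]"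
    using assms by (metis Suc_le_mono le_Suc_eq upt_add_eq_append le_add_diff_inverse)
  thus ?thesis unfolding Mprod_def by (simp add: foldl_Mmat[symmetric])
qed

lemma Mprod_cons:
  assumes "s \<le> t2"
  shows "Mprod M s t2 = matmul (Mmat M s) (Mprod M (Suc s) t2)"
proof -
  have "[s..<Suc t2] = s # [Suc s..<Suc t2]" using assms by (simp add: upt_conv_Cons)
  thus ?thesis unfolding Mprod_def by (simp add: foldl_Mmat[symmetric])
qed

lemma Mprod_empty: "Mprod M (Suc t) t = idm"
  unfolding Mprod_def by simp

lemma Mmat_row_sum:
  fixes M :: "nat \<Rightarrow> ('v::finite \<times> 'v) set"
  assumes "is_matching E (M t)"
  shows "(\<Sum>v\<in>UNIV. Mmat M t u v) = 1"
  using sum_Mmat[of E M t u "\<lambda>_. 1", OF assms] by simp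

lemma Mmat_nonneg: "Mmat M t u v \<ge> 0"
  unfolding Mmat_def by auto

lemma foldl_props:
  fixes M :: "nat \<Rightarrow> ('v::finite \<times> 'v) set" and xs :: "nat list"
  assumes "\<And>t. is_matching E (M t)"
  defines "F \<equiv> foldl (\<lambda>A s. matmul A (Mmat M s)) idm xs"
  shows "(\<forall>i. (\<Sum>j\<in>UNIV. F i j) = 1) \<and> (\<forall>j. (\<Sum>i\<in>UNIV. F i j) = 1) \<and> (\<forall>i j. F i j \<ge> 0)"
  unfolding F_def
proof (induction xs rule: rev_induct)
  case Nil
  show ?case by (auto simp: idm_def)
next
  case (snoc x xs)
  define G where "G = foldl (\<lambda>A s. matmul A (Mmat M s)) idm xs"
  have IH: "\<And>i. (\<Sum>j\<in>UNIV. G i j) = 1" "\<And>j. (\<Sum>i\<in>UNIV. G i j) = 1" "\<And>i j. G i j \<ge> 0"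
    using snoc.IH unfolding G_def by auto
  have eq: "foldl (\<lambda>A s. matmul A (Mmat M s)) idm (xs @ [x]) = matmul G (Mmat M x)"
    by (simp add: G_def)
  have r: "(\<Sum>j\<in>UNIV. matmul G (Mmat M x) i j) = 1" for i
  proof -
    have "(\<Sum>j\<in>UNIV. matmul G (Mmat M x) i j) = (\<Sum>k\<in>UNIV. G i k * (\<Sum>j\<in>UNIV. Mmat M x k j))"
      unfolding matmul_def by (simp add: sum_distrib_left) (rule sum.swap)
    also have "\<dots> = 1" using Mmat_row_sum[of E M x, OF assms(1)] IH by simp
    finally show ?thesis .
  qed
  have c: "(\<Sum>i\<in>UNIV. matmul G (Mmat M x) i j) = 1" for j
  proof -
    have "(\<Sum>i\<in>UNIV. matmul G (Mmat M x) i j) = (\<Sum>k\<in>UNIV. (\<Sum>i\<in>UNIV. G i k) * Mmat M x k j)"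
      unfolding matmul_def by (simp add: sum_distrib_right) (rule sum.swap)
    also have "\<dots> = (\<Sum>k\<in>UNIV. Mmat M x j k)" using IH by (simp add: Mmat_sym)
    also have "\<dots> = 1" using Mmat_row_sum[of E M x, OF assms(1)] by simp
    finally show ?thesis .
  qed
  have n: "matmul G (Mmat M x) i j \<ge> 0" for i j
    unfolding matmul_def using IH Mmat_nonneg by (intro sum_nonneg mult_nonneg_nonneg) auto
  show ?case using r c n eq by simp
qed

lemma Mprod_props:
  fixes M :: "nat \<Rightarrow> ('v::finite \<times> 'v) set"
  assumes "\<And>t. is_matching E (M t)"
  shows "(\<Sum>j\<in>UNIV. Mprod M a b i j) = 1" "(\<Sum>i\<in>UNIV. Mprod M a b i j) = 1" "Mprod M a b i j \<ge> 0"
  using foldl_props[of E M, OF assms] unfolding Mprod_def by blast+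

definition ee :: "('v \<times> 'v) set \<Rightarrow> ('v \<Rightarrow> int) \<Rightarrow> bool \<Rightarrow> 'v \<Rightarrow> real" where
  "ee Mt L \<beta> u = (let s = L u + L (partner Mt u) in
      real_of_int (s div 2 + (if odd s \<and> \<beta> then 1 else 0)) - real_of_int s / 2)"

lemma div2_real: "real_of_int (s div 2) = (if odd s then (real_of_int s - 1) / 2 else real_of_int s / 2)"
proof (cases "odd s")
  case True
  then obtain q where "s = 2 * q + 1" by (metis oddE)
  thus ?thesis by simp
next
  case False
  then obtain q where "s = 2 * q" by (metis evenE)
  thus ?thesis by simp
qed

lemma ee_core: "real_of_int (s div 2 + (if odd s \<and> \<beta> then 1 else 0)) - real_of_int s / 2 =
   (if odd s then (if \<beta> then 1/2 else -1/2) else 0)"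
proof (cases "odd s")
  case True
  then obtain q where q: "s = 2 * q + 1" by (metis oddE)
  have "(2 * q + 1) div 2 = q" by presburger
  thus ?thesis using True q by (cases \<beta>) (simp_all add: field_simps)
next
  case False
  then obtain q where q: "s = 2 * q" by (metis evenE)
  thus ?thesis using False by simp
qed

lemma ee_cases: "ee Mt L \<beta> u = (let s = L u + L (partner Mt u) in if odd s then (if \<beta> then 1/2 else -1/2) else 0)"
  unfolding ee_def Let_def by (rule ee_core)

lemma disc_step_partner:
  "disc_step M t b x w =
     (if first (M t) w then
        (let s = x w + x (partner (M t) w) in s div 2 + (if odd s \<and> b (t,w) then 1 else 0))
      else if second (M t) w then
        (let s = x (partner (M t) w) + x w in s div 2 + (if odd s \<and> \<not> b (t, partner (M t) w) then 1 else 0))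
      else x w)"
proof (cases "first (M t) w")
  case True
  hence "partner (M t) w = (THE v. (w,v) \<in> M t)" unfolding partner_def first_def by simp
  thus ?thesis using True unfolding disc_step_def first_def by (simp only: if_True Let_def)
next
  case F: False
  show ?thesis
  proof (cases "second (M t) w")
    case True
    hence "partner (M t) w = (THE v. (v,w) \<in> M t)" using F unfolding partner_def first_def second_def by simp
    thus ?thesis using True F unfolding disc_step_def first_def second_def by (simp only: if_True if_False Let_def)
  next
    case False
    thus ?thesis using F unfolding disc_step_def first_def second_def by (simp only: if_False)
  qed
qed

lemma sym_sum:
  fixes L Y :: "'v::finite \<Rightarrow> real"
  assumes mt: "is_matching E Mt"
  shows "(\<Sum>w\<in>UNIV. L w * (if matched Mt w then (Y w + Y (partner Mt w)) / 2 else Y w)) =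
         (\<Sum>w\<in>UNIV. (if matched Mt w then (L w + L (partner Mt w)) / 2 else L w) * Y w)"
proof -
  let ?m = "matched Mt" and ?p = "partner Mt"
  have a: "(\<Sum>w\<in>UNIV. L w * (if ?m w then (Y w + Y (?p w)) / 2 else Y w)) =
     (\<Sum>w\<in>UNIV. (if ?m w then L w * Y w / 2 else L w * Y w)) + (\<Sum>w\<in>UNIV. (if ?m w then L w * Y (?p w) / 2 else 0))"
    by (subst sum.distrib[symmetric], rule sum.cong) (auto simp: field_simps)
  have b: "(\<Sum>w\<in>UNIV. (if ?m w then (L w + L (?p w)) / 2 else L w) * Y w) =
     (\<Sum>w\<in>UNIV. (if ?m w then L w * Y w / 2 else L w * Y w)) + (\<Sum>w\<in>UNIV. (if ?m w then L (?p w) * Y w / 2 else 0))"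
    by (subst sum.distrib[symmetric], rule sum.cong) (auto simp: field_simps)
  have c: "(\<Sum>w\<in>UNIV. (if ?m w then L w * Y (?p w) / 2 else 0)) = (\<Sum>w\<in>UNIV. (if ?m w then L (?p w) * Y w / 2 else 0))"
  proof -
    have eq: "(if ?m (?p w) then L (?p w) * Y (?p (?p w)) / 2 else 0) = (if ?m w then L (?p w) * Y w / 2 else 0)" for w
      using matched_partner[OF mt, of w] partner_invol[OF mt, of w] by simp
    have "(\<Sum>w\<in>UNIV. (if ?m w then L w * Y (?p w) / 2 else 0)) = (\<Sum>w\<in>UNIV. (if ?m (?p w) then L (?p w) * Y (?p (?p w)) / 2 else 0))"
      by (rule sum_partner[OF mt, symmetric])
    also have "\<dots> = (\<Sum>w\<in>UNIV. (if ?m w then L (?p w) * Y w / 2 else 0))" using eq by simp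
    finally show ?thesis .
  qed
  show ?thesis using a b c by simp
qed

locale lb =
  fixes E :: "('v::finite \<times> 'v) set" and M :: "nat \<Rightarrow> ('v \<times> 'v) set" and t2 :: nat and k :: 'v
    and x0 :: "'v \<Rightarrow> int"
  assumes mt: "\<And>t. is_matching E (M t)"
begin

definition y :: "nat \<Rightarrow> 'v \<Rightarrow> real" where "y s w = Mprod M (Suc s) t2 w k"
definition Z :: "nat \<Rightarrow> (nat \<times> 'v \<Rightarrow> bool) \<Rightarrow> real" where
  "Z T b = (\<Sum>w\<in>UNIV. real_of_int (load M b x0 T w) * y T w)"
definition dd :: "nat \<Rightarrow> 'v \<Rightarrow> real" where
  "dd s u = y s u - y s (partner (M s) u)"

lemma y_step:
  assumes "Suc s \<le> t2"
  shows "y s w = (if matched (M (Suc s)) w then (y (Suc s) w + y (Suc s) (partner (M (Suc s)) w)) / 2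
                  else y (Suc s) w)"
proof -
  have "y s w = (\<Sum>v\<in>UNIV. Mmat M (Suc s) w v * Mprod M (Suc (Suc s)) t2 v k)"
    unfolding y_def using Mprod_cons[OF assms, of M] by (simp add: matmul_def)
  also have "\<dots> = (if matched (M (Suc s)) w then (Mprod M (Suc (Suc s)) t2 w k + Mprod M (Suc (Suc s)) t2 (partner (M (Suc s)) w) k) / 2 else Mprod M (Suc (Suc s)) t2 w k)"
    by (rule sum_Mmat[of E M "Suc s" w, OF mt])
  finally show ?thesis unfolding y_def .
qed

lemma load_diff:
  fixes T :: nat and b :: "nat \<times> 'v \<Rightarrow> bool"
  defines "t \<equiv> Suc T"
  defines "L \<equiv> load M b x0 T"
  shows "real_of_int (load M b x0 (Suc T) w) - (if matched (M t) w then (L w + L (partner (M t) w)) / 2 else L w) =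
    (if first (M t) w then ee (M t) L (b (t,w)) w
     else if second (M t) w then - ee (M t) L (b (t, partner (M t) w)) (partner (M t) w) else 0)"
proof -
  have mtt: "is_matching E (M t)" by (rule mt)
  have ld: "load M b x0 (Suc T) w = disc_step M t b L w" unfolding t_def L_def by simp
  let ?p = "partner (M t) w"
  show ?thesis
  proof (cases "first (M t) w")
    case True
    hence m: "matched (M t) w" using matched_iff[OF mtt] by blast
    have "load M b x0 (Suc T) w = (let s = L w + L ?p in s div 2 + (if odd s \<and> b (t,w) then 1 else 0))"
      unfolding ld disc_step_partner using True by simp
    thus ?thesis using True m unfolding ee_def Let_def by (simp add: add_divide_distrib)
  next
    case F: False
    show ?thesis
    proof (cases "second (M t) w")
      case True
      hence m: "matched (M t) w" using matched_iff[OF mtt] by blast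
      have pi: "partner (M t) ?p = w" by (rule partner_invol[OF mtt])
      define s where "s = L ?p + L w"
      have "load M b x0 (Suc T) w = s div 2 + (if odd s \<and> \<not> b (t, ?p) then 1 else 0)"
        unfolding ld disc_step_partner s_def using True F by simp
      hence "real_of_int (load M b x0 (Suc T) w) - (if matched (M t) w then (L w + L ?p) / 2 else L w)
         = real_of_int (s div 2 + (if odd s \<and> \<not> b (t, ?p) then 1 else 0)) - real_of_int s / 2"
        using m unfolding s_def by (simp add: add_divide_distrib)
      also have "\<dots> = - (real_of_int (s div 2 + (if odd s \<and> b (t, ?p) then 1 else 0)) - real_of_int s / 2)"
        unfolding ee_core by simp
      also have "\<dots> = - ee (M t) L (b (t, ?p)) ?p"
        unfolding ee_def Let_def pi s_def by simp
      finally show ?thesis by (simp only: F True if_False if_True of_int_add)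
    next
      case False
      hence "\<not> matched (M t) w" using F matched_iff[OF mtt] by blast
      thus ?thesis using F False unfolding ld disc_step_partner by simp
    qed
  qed
qed

end

context lb begin

lemma Z_step:
  assumes "Suc T \<le> t2"
  shows "Z (Suc T) b - Z T b = (\<Sum>u\<in>UNIV. if first (M (Suc T)) u then
           ee (M (Suc T)) (load M b x0 T) (b (Suc T, u)) u * dd (Suc T) u else 0)"
proof -
  define t where "t = Suc T"
  define L where "L = load M b x0 T"
  define Y where "Y = y t"
  define p where "p = partner (M t)"
  define m where "m = matched (M t)"
  define e where "e u = ee (M t) L (b (t,u)) u" for u
  have mtt: "is_matching E (M t)" by (rule mt)
  have ZT: "Z T b = (\<Sum>w\<in>UNIV. (if m w then (real_of_int (L w) + real_of_int (L (p w))) / 2 else real_of_int (L w)) * Y w)"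
  proof -
    have "Z T b = (\<Sum>w\<in>UNIV. real_of_int (L w) * (if m w then (Y w + Y (p w)) / 2 else Y w))"
      unfolding Z_def L_def Y_def m_def p_def t_def using y_step[OF assms] by simp
    also have "\<dots> = (\<Sum>w\<in>UNIV. (if m w then (real_of_int (L w) + real_of_int (L (p w))) / 2 else real_of_int (L w)) * Y w)"
      unfolding m_def p_def by (rule sym_sum[OF mtt])
    finally show ?thesis .
  qed
  have "Z (Suc T) b - Z T b = (\<Sum>w\<in>UNIV. (real_of_int (load M b x0 (Suc T) w) -
        (if m w then (real_of_int (L w) + real_of_int (L (p w))) / 2 else real_of_int (L w))) * Y w)"
    unfolding ZT by (simp add: Z_def Y_def t_def sum_subtractf[symmetric] left_diff_distrib)
  also have "\<dots> = (\<Sum>w\<in>UNIV. (if first (M t) w then e w * Y w else 0) -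
        (if second (M t) w then e (p w) * Y w else 0))"
  proof (rule sum.cong[OF refl])
    fix w
    have "real_of_int (load M b x0 (Suc T) w) - (if m w then (real_of_int (L w) + real_of_int (L (p w))) / 2 else real_of_int (L w))
       = (if first (M t) w then e w else if second (M t) w then - e (p w) else 0)"
      using load_diff[of b T w] unfolding e_def m_def p_def t_def L_def by simp
    thus "(real_of_int (load M b x0 (Suc T) w) - (if m w then (real_of_int (L w) + real_of_int (L (p w))) / 2 else real_of_int (L w))) * Y w =
      (if first (M t) w then e w * Y w else 0) - (if second (M t) w then e (p w) * Y w else 0)"
      using first_not_second[OF mtt, of w] by auto
  qed
  also have "\<dots> = (\<Sum>w\<in>UNIV. (if first (M t) w then e w * Y w else 0)) - (\<Sum>w\<in>UNIV. (if second (M t) w then e (p w) * Y w else 0))"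
    by (rule sum_subtractf)
  also have "(\<Sum>w\<in>UNIV. (if second (M t) w then e (p w) * Y w else 0)) = (\<Sum>w\<in>UNIV. (if first (M t) w then e w * Y (p w) else 0))"
  proof -
    have "(\<Sum>w\<in>UNIV. (if second (M t) w then e (p w) * Y w else 0)) = (\<Sum>w\<in>UNIV. (if second (M t) (p w) then e (p (p w)) * Y (p w) else 0))"
      unfolding p_def by (rule sum_partner[OF mtt, symmetric])
    also have "\<dots> = (\<Sum>w\<in>UNIV. (if first (M t) w then e w * Y (p w) else 0))"
      unfolding p_def by (simp only: second_partner_iff[OF mtt] partner_invol[OF mtt])
    finally show ?thesis .
  qed
  also have "(\<Sum>w\<in>UNIV. (if first (M t) w then e w * Y w else 0)) - (\<Sum>w\<in>UNIV. (if first (M t) w then e w * Y (p w) else 0))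
     = (\<Sum>u\<in>UNIV. if first (M t) u then e u * dd t u else 0)"
    unfolding sum_subtractf[symmetric] dd_def Y_def p_def by (rule sum.cong) (auto simp: right_diff_distrib)
  finally show ?thesis unfolding e_def t_def L_def .
qed

end

lemma cosh_bound_nonneg:
  fixes x :: real assumes "x \<ge> 0"
  shows "(exp x + exp (-x)) / 2 \<le> exp (x^2 / 2)"
proof -
  have h: "- (2*x) * (1/2) + ln (1 + (1/2) * (exp (2*x) - 1)) \<le> (2*x)^2 / 8"
    using Hoeffdings_lemma_aux[of "2*x" "1/2"] assms by simp
  have pos: "1 + (1/2) * (exp (2*x) - 1) > 0" using exp_gt_zero[of "2*x"] by (simp add: field_simps add_pos_pos)
  have "ln (1 + (1/2) * (exp (2*x) - 1)) \<le> x + x^2/2" using h by (simp add: power2_eq_square)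
  hence "1 + (1/2) * (exp (2*x) - 1) \<le> exp (x + x^2/2)"
    using pos by (metis exp_le_cancel_iff exp_ln)
  moreover have "exp (x + x^2/2) = exp x * exp (x^2/2)" by (rule exp_add)
  ultimately have "(1 + exp (2*x)) / 2 \<le> exp x * exp (x^2/2)" by (simp add: field_simps)
  moreover have "(1 + exp (2*x)) / 2 = exp x * ((exp x + exp (-x)) / 2)"
    by (simp add: field_simps exp_add[symmetric] exp_minus)
  ultimately show ?thesis by (simp add: mult_le_cancel_left_pos)
qed

lemma cosh_bound:
  fixes x :: real
  shows "(exp x + exp (-x)) / 2 \<le> exp (x^2 / 2)"
proof (cases "x \<ge> 0")
  case True thus ?thesis by (rule cosh_bound_nonneg)
next
  case False
  hence "(exp (-x) + exp (-(-x))) / 2 \<le> exp ((-x)^2 / 2)" by (intro cosh_bound_nonneg) simp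
  thus ?thesis by (simp add: add.commute)
qed

lemma pair_fubini:
  fixes f :: "'a \<times> 'b \<Rightarrow> real"
  assumes "finite (set_pmf p)" "finite (set_pmf q)"
  shows "measure_pmf.expectation (pair_pmf p q) f =
         measure_pmf.expectation p (\<lambda>a. measure_pmf.expectation q (\<lambda>b. f (a,b)))"
proof -
  have "measure_pmf.expectation (pair_pmf p q) f = (\<Sum>x\<in>set_pmf p \<times> set_pmf q. f x * pmf (pair_pmf p q) x)"
    using assms by (intro integral_measure_pmf_real) auto
  also have "\<dots> = (\<Sum>a\<in>set_pmf p. \<Sum>b\<in>set_pmf q. f (a,b) * (pmf p a * pmf q b))"
    unfolding sum.cartesian_product by (intro sum.cong refl) (auto simp: pmf_pair)
  also have "\<dots> = (\<Sum>a\<in>set_pmf p. (\<Sum>b\<in>set_pmf q. f (a,b) * pmf q b) * pmf p a)"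
    by (simp add: sum_distrib_left sum_distrib_right mult_ac)
  also have "\<dots> = (\<Sum>a\<in>set_pmf p. measure_pmf.expectation q (\<lambda>b. f (a,b)) * pmf p a)"
    using assms by (intro sum.cong refl arg_cong2[where f="(*)"]) (simp add: integral_measure_pmf_real[symmetric])
  also have "\<dots> = measure_pmf.expectation p (\<lambda>a. measure_pmf.expectation q (\<lambda>b. f (a,b)))"
    using assms by (intro integral_measure_pmf_real[symmetric]) auto
  finally show ?thesis .
qed

lemma expectation_mono_finite:
  fixes f g :: "'a \<Rightarrow> real"
  assumes "finite (set_pmf p)" "\<And>x. x \<in> set_pmf p \<Longrightarrow> f x \<le> g x"
  shows "measure_pmf.expectation p f \<le> measure_pmf.expectation p g"
  using assms by (intro integral_mono_AE) (auto simp: AE_measure_pmf_iff intro: integrable_measure_pmf_finite)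

lemma chernoff_step:
  fixes W :: "'a \<Rightarrow> real"
  assumes "finite (set_pmf p)" "l > 0"
  shows "measure_pmf.prob p {x. W x \<ge> a} \<le> measure_pmf.expectation p (\<lambda>x. exp (l * W x)) / exp (l * a)"
proof -
  have "measure_pmf.prob p {x\<in>space (measure_pmf p). exp (l * W x) \<ge> exp (l * a)} \<le> measure_pmf.expectation p (\<lambda>x. exp (l * W x)) / exp (l * a)"
    using assms by (intro integral_Markov_inequality_measure[where A = UNIV]) (auto intro: integrable_measure_pmf_finite)
  moreover have "{x\<in>space (measure_pmf p). exp (l * W x) \<ge> exp (l * a)} = {x. W x \<ge> a}"
    using assms by auto
  ultimately show ?thesis by simp
qed

lemma finite_Pi_bern:
  assumes "finite A"
  shows "finite (set_pmf (Pi_pmf A False (\<lambda>_. bernoulli_pmf (1/2))))"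
proof -
  have "set_pmf (Pi_pmf A False (\<lambda>_. bernoulli_pmf (1/2))) = PiE_dflt A False (set_pmf \<circ> (\<lambda>_. bernoulli_pmf (1/2)))"
    using assms by (rule set_Pi_pmf)
  moreover have "finite (PiE_dflt A False (set_pmf \<circ> (\<lambda>_. bernoulli_pmf (1/2))))"
    using assms by (intro finite_PiE_dflt) auto
  ultimately show ?thesis by simp
qed

lemma finite_orient: "finite (set_pmf (orient_pmf T :: (nat \<times> 'v::finite \<Rightarrow> bool) pmf))"
  unfolding orient_pmf_def by (rule finite_Pi_bern) simp

lemma orient_Suc:
  "(orient_pmf (Suc T) :: (nat \<times> 'v::finite \<Rightarrow> bool) pmf) =
     map_pmf (\<lambda>(f,g) x. if x \<in> {1..T} \<times> UNIV then f x else g x)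
       (pair_pmf (orient_pmf T) (Pi_pmf ({Suc T} \<times> UNIV) False (\<lambda>_. bernoulli_pmf (1/2))))"
proof -
  have eq: "{1..Suc T} \<times> (UNIV :: 'v set) = ({1..T} \<times> UNIV) \<union> ({Suc T} \<times> UNIV)" by auto
  show ?thesis unfolding orient_pmf_def eq by (rule Pi_pmf_union) auto
qed

lemma disc_step_cong:
  assumes "\<And>w. b (t,w) = b' (t,w)"
  shows "disc_step M t b x = disc_step M t b' x"
  unfolding disc_step_def using assms by (simp add: fun_eq_iff)

lemma load_cong:
  assumes "\<And>t w. 1 \<le> t \<Longrightarrow> t \<le> T \<Longrightarrow> b (t,w) = b' (t,w)"
  shows "load M b x0 T = load M b' x0 T"
  using assms
proof (induction T)
  case 0 thus ?case by simp
next
  case (Suc T)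
  have "load M b x0 T = load M b' x0 T" using Suc by simp
  moreover have "disc_step M (Suc T) b x = disc_step M (Suc T) b' x" for x
    using Suc.prems by (intro disc_step_cong) simp
  ultimately show ?case by simp
qed

context lb begin

definition V1 :: "nat \<Rightarrow> real" where
  "V1 s = (\<Sum>u\<in>UNIV. if first (M s) u then (dd s u)^2 else 0)"
definition Phi :: "nat \<Rightarrow> real \<Rightarrow> real" where
  "Phi s c = (\<Sum>w\<in>UNIV. (y s w - c)^2)"
definition Vt :: "nat \<Rightarrow> real" where
  "Vt T = (\<Sum>s\<in>{1..T}. V1 s)"

lemma V1_nonneg: "V1 s \<ge> 0"
  unfolding V1_def by (intro sum_nonneg) auto

lemma pot_step:
  assumes "Suc s \<le> t2"
  shows "Phi (Suc s) c - Phi s c = V1 (Suc s) / 2"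
proof -
  define t where "t = Suc s"
  define Y where "Y = y t"
  define p where "p = partner (M t)"
  define m where "m = matched (M t)"
  have mtt: "is_matching E (M t)" by (rule mt)
  have pi: "p (p w) = w" for w unfolding p_def by (rule partner_invol[OF mtt])
  have mp: "m (p w) = m w" for w unfolding p_def m_def by (rule matched_partner[OF mtt])
  define G where "G w = (Y w - c)^2 - ((if m w then (Y w + Y (p w)) / 2 else Y w) - c)^2" for w
  have "Phi (Suc s) c - Phi s c = (\<Sum>w\<in>UNIV. G w)"
    unfolding Phi_def G_def sum_subtractf[symmetric] Y_def m_def p_def t_def
    using y_step[OF assms] by simp
  moreover have "2 * (\<Sum>w\<in>UNIV. G w) = (\<Sum>w\<in>UNIV. if m w then (Y w - Y (p w))^2 / 2 else 0)"
  proof -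
    have "2 * (\<Sum>w\<in>UNIV. G w) = (\<Sum>w\<in>UNIV. G w) + (\<Sum>w\<in>UNIV. G (p w))"
      unfolding p_def sum_partner[OF mtt] by simp
    also have "\<dots> = (\<Sum>w\<in>UNIV. G w + G (p w))" by (simp add: sum.distrib)
    also have "\<dots> = (\<Sum>w\<in>UNIV. if m w then (Y w - Y (p w))^2 / 2 else 0)"
      by (intro sum.cong refl) (auto simp: G_def mp pi power2_eq_square field_simps)
    finally show ?thesis .
  qed
  moreover have "(\<Sum>w\<in>UNIV. if m w then (Y w - Y (p w))^2 / 2 else 0) = V1 t"
  proof -
    have "(\<Sum>w\<in>UNIV. if m w then (Y w - Y (p w))^2 / 2 else 0) =
       (\<Sum>w\<in>UNIV. if first (M t) w then (Y w - Y (p w))^2 / 2 else 0) + (\<Sum>w\<in>UNIV. if second (M t) w then (Y w - Y (p w))^2 / 2 else 0)"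
      unfolding sum.distrib[symmetric] m_def
      using matched_iff[OF mtt] first_not_second[OF mtt] by (intro sum.cong refl) auto
    also have "(\<Sum>w\<in>UNIV. if second (M t) w then (Y w - Y (p w))^2 / 2 else 0) =
        (\<Sum>w\<in>UNIV. if second (M t) (p w) then (Y (p w) - Y (p (p w)))^2 / 2 else 0)"
      unfolding p_def by (rule sum_partner[OF mtt, symmetric])
    also have "\<dots> = (\<Sum>w\<in>UNIV. if first (M t) w then (Y w - Y (p w))^2 / 2 else 0)"
      unfolding pi unfolding p_def second_partner_iff[OF mtt]
      by (intro sum.cong refl) (simp add: power2_commute)
    finally show ?thesis unfolding V1_def dd_def Y_def p_def
      by (simp add: sum.distrib[symmetric] sum_divide_distrib[symmetric] if_distrib) (intro sum.cong refl, auto)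
  qed
  ultimately show ?thesis unfolding t_def by simp
qed

lemma pot_total:
  assumes "T \<le> t2"
  shows "Vt T = 2 * (Phi T c - Phi 0 c)"
  using assms
proof (induction T)
  case 0 thus ?case by (simp add: Vt_def)
next
  case (Suc T)
  have "Vt (Suc T) = Vt T + V1 (Suc T)" unfolding Vt_def by simp
  thus ?case using Suc pot_step[of T c] by simp
qed

end

context lb begin

lemma factor_bound:
  fixes L :: "'v \<Rightarrow> int" and l :: real
  shows "exp (l * (if first (M t) u then ee (M t) L True u * dd t u else 0)) * (1/2) +
         exp (l * (if first (M t) u then ee (M t) L False u * dd t u else 0)) * (1 - 1/2)
         \<le> exp (l^2 / 8 * (if first (M t) u then (dd t u)^2 else 0))"
proof (cases "first (M t) u")
  case True
  define s where "s = L u + L (partner (M t) u)"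
  show ?thesis
  proof (cases "odd s")
    case True
    have "exp (l * (1/2 * dd t u)) * (1/2) + exp (l * (-(1/2) * dd t u)) * (1 - 1/2)
          = (exp (l * dd t u / 2) + exp (- (l * dd t u / 2))) / 2" by (simp add: field_simps)
    also have "\<dots> \<le> exp ((l * dd t u / 2)^2 / 2)" by (rule cosh_bound)
    also have "\<dots> = exp (l^2 / 8 * (dd t u)^2)" by (simp add: power_mult_distrib field_simps)
    finally show ?thesis using \<open>first (M t) u\<close> True unfolding ee_cases Let_def s_def by simp
  next
    case False
    thus ?thesis using \<open>first (M t) u\<close> unfolding ee_cases Let_def s_def by simp
  qed
next
  case False thus ?thesis by simp
qed

lemma inner_bound:
  fixes L :: "'v \<Rightarrow> int" and l :: real
  shows "measure_pmf.expectation (Pi_pmf ({t} \<times> UNIV) False (\<lambda>_. bernoulli_pmf (1/2)))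
     (\<lambda>g. exp (l * (\<Sum>u\<in>UNIV. if first (M t) u then ee (M t) L (g (t,u)) u * dd t u else 0)))
     \<le> exp (l^2 / 8 * V1 t)"
proof -
  define h where "h u \<beta> = (if first (M t) u then ee (M t) L \<beta> u * dd t u else 0)" for u \<beta>
  define H where "H x \<beta> = exp (l * h (snd x) \<beta>)" for x :: "nat \<times> 'v" and \<beta>
  define q where "q u = l^2 / 8 * (if first (M t) u then (dd t u)^2 else 0)" for u
  define B where "B = {t} \<times> (UNIV :: 'v set)"
  have B: "B = Pair t ` UNIV" unfolding B_def by auto
  have inj: "inj (Pair t :: 'v \<Rightarrow> _)" by (auto intro: injI)
  have finB: "finite B" unfolding B_def by simp
  have pe: "exp (l * (\<Sum>u\<in>UNIV. h u (g (t,u)))) = (\<Prod>x\<in>B. H x (g x))" for g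
  proof -
    have "exp (l * (\<Sum>u\<in>UNIV. h u (g (t,u)))) = (\<Prod>u\<in>UNIV. exp (l * h u (g (t,u))))"
      by (simp add: sum_distrib_left exp_sum)
    also have "\<dots> = (\<Prod>x\<in>B. H x (g x))"
      unfolding B H_def using inj by (simp add: prod.reindex)
    finally show ?thesis .
  qed
  have "measure_pmf.expectation (Pi_pmf B False (\<lambda>_. bernoulli_pmf (1/2)))
     (\<lambda>g. exp (l * (\<Sum>u\<in>UNIV. h u (g (t,u))))) =
     measure_pmf.expectation (Pi_pmf B False (\<lambda>_. bernoulli_pmf (1/2))) (\<lambda>g. \<Prod>x\<in>B. H x (g x))"
    unfolding pe ..
  also have "\<dots> = (\<Prod>x\<in>B. measure_pmf.expectation (bernoulli_pmf (1/2)) (H x))"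
    using finB by (intro expectation_prod_Pi_pmf) (auto simp: H_def intro: integrable_measure_pmf_finite)
  also have "\<dots> = (\<Prod>x\<in>B. H x True * (1/2) + H x False * (1 - 1/2))"
    by simp
  also have "\<dots> \<le> (\<Prod>x\<in>B. exp (q (snd x)))"
  proof (intro prod_mono conjI)
    fix x show "0 \<le> H x True * (1/2) + H x False * (1 - 1/2)" by (simp add: H_def)
    show "H x True * (1/2) + H x False * (1 - 1/2) \<le> exp (q (snd x))"
      unfolding H_def h_def q_def by (rule factor_bound)
  qed
  also have "\<dots> = (\<Prod>u\<in>UNIV. exp (q u))"
    unfolding B using inj by (simp add: prod.reindex)
  also have "\<dots> = exp (\<Sum>u\<in>UNIV. q u)" by (simp add: exp_sum)
  also have "\<dots> = exp (l^2 / 8 * V1 t)"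
    unfolding q_def V1_def by (simp add: sum_distrib_left if_distrib)
  finally show ?thesis unfolding B_def h_def .
qed

end

context lb begin

lemma Z_load_eq: "load M b x0 T = load M b' x0 T \<Longrightarrow> Z T b = Z T b'"
  unfolding Z_def by simp

lemma mgf:
  assumes "T \<le> t2"
  shows "measure_pmf.expectation (orient_pmf T) (\<lambda>b. exp (l * (Z T b - Z 0 b))) \<le> exp (l^2 / 8 * Vt T)"
  using assms
proof (induction T)
  case 0
  thus ?case by (simp add: Vt_def)
next
  case (Suc T)
  define t where "t = Suc T"
  define A where "A = {1..T} \<times> (UNIV :: 'v set)"
  define Q where "Q = (Pi_pmf ({t} \<times> UNIV) False (\<lambda>_. bernoulli_pmf (1/2)) :: (nat \<times> 'v \<Rightarrow> bool) pmf)"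
  define mg where "mg = (\<lambda>(f::nat \<times> 'v \<Rightarrow> bool, g::nat \<times> 'v \<Rightarrow> bool) x. if x \<in> A then f x else g x)"
  define F where "F f = exp (l * (Z T f - Z 0 f))" for f
  define HH where "HH f g = (\<Sum>u\<in>UNIV. if first (M t) u then ee (M t) (load M f x0 T) (g (t,u)) u * dd t u else 0)" for f g
  have IH: "measure_pmf.expectation (orient_pmf T) F \<le> exp (l^2 / 8 * Vt T)"
    using Suc unfolding F_def by simp
  have finO: "finite (set_pmf (orient_pmf T :: (nat \<times> 'v \<Rightarrow> bool) pmf))" by (rule finite_orient)
  have finQ: "finite (set_pmf Q)" unfolding Q_def by (rule finite_Pi_bern) simp
  have key: "exp (l * (Z t (mg (f,g)) - Z 0 (mg (f,g)))) = F f * exp (l * HH f g)" for f g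
  proof -
    define b where "b = mg (f,g)"
    have lc: "load M b x0 T = load M f x0 T"
      by (rule load_cong) (auto simp: b_def mg_def A_def)
    have bt: "b (t,u) = g (t,u)" for u by (simp add: b_def mg_def A_def t_def)
    have "Z t b - Z T b = HH f g"
      unfolding t_def Z_step[OF Suc.prems] HH_def lc bt[unfolded t_def] t_def ..
    moreover have "Z T b = Z T f" by (rule Z_load_eq[OF lc])
    moreover have "Z 0 b = Z 0 f" by (rule Z_load_eq) simp
    ultimately have "Z t b - Z 0 b = (Z T f - Z 0 f) + HH f g" by simp
    thus ?thesis unfolding F_def b_def by (simp add: distrib_left exp_add)
  qed
  have "measure_pmf.expectation (orient_pmf t) (\<lambda>b. exp (l * (Z t b - Z 0 b))) =
        measure_pmf.expectation (pair_pmf (orient_pmf T) Q) (\<lambda>fg. exp (l * (Z t (mg fg) - Z 0 (mg fg))))"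
    unfolding t_def orient_Suc Q_def mg_def A_def t_def by simp
  also have "\<dots> = measure_pmf.expectation (pair_pmf (orient_pmf T) Q) (\<lambda>fg. F (fst fg) * exp (l * HH (fst fg) (snd fg)))"
    using key by (metis prod.collapse)
  also have "\<dots> = measure_pmf.expectation (orient_pmf T) (\<lambda>f. measure_pmf.expectation Q (\<lambda>g. F f * exp (l * HH f g)))"
    using pair_fubini[OF finO finQ] by simp
  also have "\<dots> = measure_pmf.expectation (orient_pmf T) (\<lambda>f. F f * measure_pmf.expectation Q (\<lambda>g. exp (l * HH f g)))"
    by simp
  also have "\<dots> \<le> measure_pmf.expectation (orient_pmf T) (\<lambda>f. F f * exp (l^2 / 8 * V1 t))"
  proof (rule expectation_mono_finite[OF finO])
    fix f
    have "measure_pmf.expectation Q (\<lambda>g. exp (l * HH f g)) \<le> exp (l^2 / 8 * V1 t)"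
      unfolding Q_def HH_def by (rule inner_bound)
    thus "F f * measure_pmf.expectation Q (\<lambda>g. exp (l * HH f g)) \<le> F f * exp (l^2 / 8 * V1 t)"
      by (intro mult_left_mono) (auto simp: F_def)
  qed
  also have "\<dots> = measure_pmf.expectation (orient_pmf T) F * exp (l^2 / 8 * V1 t)"
    by simp
  also have "\<dots> \<le> exp (l^2 / 8 * Vt T) * exp (l^2 / 8 * V1 t)"
    using IH by (intro mult_right_mono) auto
  also have "\<dots> = exp (l^2 / 8 * Vt t)"
    unfolding t_def Vt_def by (simp add: exp_add[symmetric] distrib_left)
  finally show ?case unfolding t_def .
qed

end

lemma disc_bound:
  fixes xi :: "'v::finite \<Rightarrow> real"
  shows "\<bar>xi j - (\<Sum>v\<in>UNIV. xi v) / real CARD('v)\<bar> \<le> discrepancy xi"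
proof -
  define n where "n = real CARD('v)"
  have n: "n > 0" unfolding n_def by simp
  have fin: "finite {\<bar>xi u - xi v\<bar> | u v. True}"
  proof -
    have "{\<bar>xi u - xi v\<bar> | u v. True} = (\<lambda>(u,v). \<bar>xi u - xi v\<bar>) ` UNIV" by auto
    thus ?thesis by simp
  qed
  have le: "\<bar>xi j - xi v\<bar> \<le> discrepancy xi" for v
    unfolding discrepancy_def using fin by (intro Max_ge) auto
  have "xi j - (\<Sum>v\<in>UNIV. xi v) / n = (\<Sum>v\<in>UNIV. xi j - xi v) / n"
    using n by (simp add: sum_subtractf n_def field_simps)
  hence "\<bar>xi j - (\<Sum>v\<in>UNIV. xi v) / n\<bar> = \<bar>\<Sum>v\<in>UNIV. xi j - xi v\<bar> / n" using n by simp
  also have "\<dots> \<le> (\<Sum>v\<in>UNIV. \<bar>xi j - xi v\<bar>) / n"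
    using n by (intro divide_right_mono sum_abs) auto
  also have "\<dots> \<le> (\<Sum>v\<in>(UNIV::'v set). discrepancy xi) / n"
    using n by (intro divide_right_mono sum_mono le) auto
  also have "\<dots> = discrepancy xi" using n by (simp add: n_def)
  finally show ?thesis unfolding n_def .
qed

lemma one_sided:
  fixes W :: "'a \<Rightarrow> real"
  assumes fin: "finite (set_pmf p)" and mg: "\<And>l. measure_pmf.expectation p (\<lambda>x. exp (l * W x)) \<le> exp (l^2 * C)"
    and C: "C \<ge> 0" and a: "a > 0"
  shows "measure_pmf.prob p {x. W x \<ge> a} \<le> (if C = 0 then 0 else exp (- (a^2 / (4 * C))))"
proof -
  have gen: "measure_pmf.prob p {x. W x \<ge> a} \<le> exp (l^2 * C - l * a)" if l: "l > 0" for l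
  proof -
    have "measure_pmf.prob p {x. W x \<ge> a} \<le> measure_pmf.expectation p (\<lambda>x. exp (l * W x)) / exp (l * a)"
      by (rule chernoff_step[OF fin l])
    also have "\<dots> \<le> exp (l^2 * C) / exp (l * a)" by (intro divide_right_mono mg) auto
    also have "\<dots> = exp (l^2 * C - l * a)" by (simp add: exp_diff)
    finally show ?thesis .
  qed
  show ?thesis
  proof (cases "C = 0")
    case False
    hence Cp: "C > 0" using C by simp
    have "measure_pmf.prob p {x. W x \<ge> a} \<le> exp ((a / (2*C))^2 * C - (a / (2*C)) * a)"
      using Cp a by (intro gen) simp
    also have "(a / (2*C))^2 * C - (a / (2*C)) * a = - (a^2 / (4 * C))"
      using Cp by (simp add: field_simps power2_eq_square)
    finally show ?thesis using False by simp
  next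
    case True
    define q where "q = measure_pmf.prob p {x. W x \<ge> a}"
    have "q \<le> 0"
    proof (rule ccontr)
      assume "\<not> q \<le> 0"
      hence qp: "q > 0" by simp
      have q1: "q \<le> 1" unfolding q_def by simp
      hence "ln q \<le> 0" using qp by simp
      define l where "l = (1 - ln q) / a"
      have lp: "l > 0" unfolding l_def using a \<open>ln q \<le> 0\<close> by simp
      have "q \<le> exp (l^2 * C - l * a)" unfolding q_def by (rule gen[OF lp])
      also have "l^2 * C - l * a = ln q - 1" using True a unfolding l_def by simp
      also have "exp (ln q - 1) = q / exp 1" using qp by (simp add: exp_diff)
      also have "\<dots> < q" using qp by (simp add: divide_less_eq)
      finally show False by simp
    qed
    thus ?thesis using True unfolding q_def by simp
  qed
qed

lemma tail_bound:
  fixes W :: "'a \<Rightarrow> real"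
  assumes fin: "finite (set_pmf p)" and mg: "\<And>l. measure_pmf.expectation p (\<lambda>x. exp (l * W x)) \<le> exp (l^2 * C)"
    and C: "C \<ge> 0" and a: "a > 0"
  shows "measure_pmf.prob p {x. \<bar>W x\<bar> \<ge> a} \<le> (if C = 0 then 0 else 2 * exp (- (a^2 / (4 * C))))"
proof -
  have mg': "measure_pmf.expectation p (\<lambda>x. exp (l * (- W x))) \<le> exp (l^2 * C)" for l
    using mg[of "-l"] by simp
  have "measure_pmf.prob p {x. \<bar>W x\<bar> \<ge> a} \<le> measure_pmf.prob p ({x. W x \<ge> a} \<union> {x. - W x \<ge> a})"
    by (intro measure_pmf.finite_measure_mono) auto
  also have "\<dots> \<le> measure_pmf.prob p {x. W x \<ge> a} + measure_pmf.prob p {x. - W x \<ge> a}"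
    by (rule measure_Un_le) auto
  also have "\<dots> \<le> (if C = 0 then 0 else exp (- (a^2 / (4 * C)))) + (if C = 0 then 0 else exp (- (a^2 / (4 * C))))"
    by (intro add_mono one_sided[OF fin mg C a] one_sided[OF fin mg' C a])
  finally show ?thesis by (simp split: if_splits)
qed

context lb begin

lemma main:
  fixes K :: real and t1 :: nat and \<delta> :: real
  assumes sm: "smoothing M K (1 / (2 * real CARD('v))) 0 t1"
    and dk: "discrepancy (\<lambda>w. real_of_int (x0 w)) \<le> K" and tt: "t1 \<le> t2"
    and dl: "\<delta> > 1 / real CARD('v)"
  shows "measure_pmf.prob (orient_pmf t1)
     {b. \<bar>(\<Sum>w\<in>UNIV. real_of_int (load M b x0 t1 w) * Mprod M (Suc t1) t2 w k) - (\<Sum>w\<in>UNIV. real_of_int (x0 w)) / real CARD('v)\<bar> \<ge> \<delta>}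
     \<le> (let S = (\<Sum>w\<in>UNIV. (Mprod M (Suc t1) t2 w k - 1 / real CARD('v))^2) in
         if S = 0 then 0 else 2 * exp (- ((\<delta> - 1 / (2 * real CARD('v)))^2 / (4 * S))))"
proof -
  define n where "n = real CARD('v)"
  have n: "n > 0" unfolding n_def by simp
  define xr where "xr w = real_of_int (x0 w)" for w
  define xbar where "xbar = (\<Sum>w\<in>UNIV. xr w) / n"
  define P where "P = Mprod M (Suc 0) t1"
  define xi where "xi = vecmat xr P"
  define Y where "Y = y t1"
  define S where "S = (\<Sum>w\<in>UNIV. (Mprod M (Suc t1) t2 w k - 1 / n)^2)"
  define a where "a = \<delta> - 1 / (2 * n)"
  have a: "a > 0" unfolding a_def using dl n by (simp add: n_def field_simps)
  have dxi: "discrepancy xi \<le> 1 / (2 * n)"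
    using sm dk unfolding smoothing_def xi_def P_def n_def xr_def by blast
  have sumxi: "(\<Sum>v\<in>UNIV. xi v) = (\<Sum>u\<in>UNIV. xr u)"
  proof -
    have "(\<Sum>v\<in>UNIV. xi v) = (\<Sum>u\<in>UNIV. xr u * (\<Sum>v\<in>UNIV. P u v))"
      unfolding xi_def vecmat_def by (simp add: sum_distrib_left) (rule sum.swap)
    also have "\<dots> = (\<Sum>u\<in>UNIV. xr u)" unfolding P_def using Mprod_props(1)[OF mt] by simp
    finally show ?thesis .
  qed
  have Ysum: "(\<Sum>j\<in>UNIV. Y j) = 1" unfolding Y_def y_def using Mprod_props(2)[OF mt] by simp
  have Ynn: "Y j \<ge> 0" for j unfolding Y_def y_def using Mprod_props(3)[OF mt] by simp
  have Z0: "Z 0 b = (\<Sum>j\<in>UNIV. xi j * Y j)" for b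
  proof -
    have "Z 0 b = (\<Sum>w\<in>UNIV. xr w * Mprod M (Suc 0) t2 w k)" unfolding Z_def y_def xr_def by simp
    also have "\<dots> = (\<Sum>w\<in>UNIV. xr w * (\<Sum>j\<in>UNIV. P w j * Y j))"
      unfolding Mprod_split[of "Suc 0" t1 t2 M, OF _ tt, simplified] P_def Y_def y_def matmul_def by simp
    also have "\<dots> = (\<Sum>j\<in>UNIV. xi j * Y j)"
      unfolding xi_def vecmat_def by (simp add: sum_distrib_left sum_distrib_right mult_ac) (rule sum.swap)
    finally show ?thesis .
  qed
  have close: "\<bar>Z 0 b - xbar\<bar> \<le> 1 / (2 * n)" for b
  proof -
    have "Z 0 b - xbar = (\<Sum>j\<in>UNIV. (xi j - xbar) * Y j)"
      unfolding Z0 by (simp add: left_diff_distrib sum_subtractf sum_distrib_left[symmetric] Ysum)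
    hence "\<bar>Z 0 b - xbar\<bar> \<le> (\<Sum>j\<in>UNIV. \<bar>xi j - xbar\<bar> * Y j)"
      using Ynn by (simp add: sum_abs[THEN order_trans] abs_mult)
    also have "\<dots> \<le> (\<Sum>j\<in>UNIV. (1 / (2 * n)) * Y j)"
    proof (intro sum_mono mult_right_mono Ynn)
      fix j
      have "\<bar>xi j - xbar\<bar> \<le> discrepancy xi"
        using disc_bound[of xi j] unfolding xbar_def sumxi[symmetric] n_def by simp
      thus "\<bar>xi j - xbar\<bar> \<le> 1 / (2 * n)" using dxi by simp
    qed
    also have "\<dots> = 1 / (2 * n)" unfolding sum_distrib_left[symmetric] Ysum by simp
    finally show ?thesis .
  qed
  have S0: "S \<ge> 0" unfolding S_def by (intro sum_nonneg) auto
  have mgS: "measure_pmf.expectation (orient_pmf t1) (\<lambda>b. exp (l * (Z t1 b - Z 0 b))) \<le> exp (l^2 * S)" for l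
  proof -
    have "Vt t1 = 2 * (Phi t1 (1/n) - Phi 0 (1/n))" by (rule pot_total[OF tt])
    moreover have "Phi 0 (1/n) \<ge> 0" unfolding Phi_def by (intro sum_nonneg) auto
    moreover have "Phi t1 (1/n) = S" unfolding Phi_def S_def y_def ..
    ultimately have "Vt t1 \<le> 2 * S" by simp
    hence "l^2 / 8 * Vt t1 \<le> l^2 * S" using S0
    proof -
      have "l^2 / 8 * Vt t1 \<le> l^2 / 8 * (2 * S)" using \<open>Vt t1 \<le> 2 * S\<close> by (intro mult_left_mono) auto
      also have "\<dots> \<le> l^2 * S" using S0 by (simp add: mult_right_mono)
      finally show ?thesis .
    qed
    hence "exp (l^2 / 8 * Vt t1) \<le> exp (l^2 * S)" by simp
    thus ?thesis by (rule order_trans[OF mgf[OF tt, of l]])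
  qed
  have "{b. \<bar>(\<Sum>w\<in>UNIV. real_of_int (load M b x0 t1 w) * Mprod M (Suc t1) t2 w k) - (\<Sum>w\<in>UNIV. real_of_int (x0 w)) / real CARD('v)\<bar> \<ge> \<delta>}
     \<subseteq> {b. \<bar>Z t1 b - Z 0 b\<bar> \<ge> a}"
  proof
    fix b assume "b \<in> {b. \<bar>(\<Sum>w\<in>UNIV. real_of_int (load M b x0 t1 w) * Mprod M (Suc t1) t2 w k) - (\<Sum>w\<in>UNIV. real_of_int (x0 w)) / real CARD('v)\<bar> \<ge> \<delta>}"
    hence "\<bar>Z t1 b - xbar\<bar> \<ge> \<delta>" unfolding Z_def y_def xbar_def xr_def n_def by simp
    thus "b \<in> {b. \<bar>Z t1 b - Z 0 b\<bar> \<ge> a}" using close[of b] unfolding a_def by simp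
  qed
  hence "measure_pmf.prob (orient_pmf t1) {b. \<bar>(\<Sum>w\<in>UNIV. real_of_int (load M b x0 t1 w) * Mprod M (Suc t1) t2 w k) - (\<Sum>w\<in>UNIV. real_of_int (x0 w)) / real CARD('v)\<bar> \<ge> \<delta>}
     \<le> measure_pmf.prob (orient_pmf t1) {b. \<bar>Z t1 b - Z 0 b\<bar> \<ge> a}"
    by (intro measure_pmf.finite_measure_mono) auto
  also have "\<dots> \<le> (if S = 0 then 0 else 2 * exp (- (a^2 / (4 * S))))"
    by (rule tail_bound[OF finite_orient mgS S0 a])
  finally show ?thesis unfolding S_def a_def n_def Let_def by simp
qed

end

lemma idm_S:
  fixes w :: "'v::finite"
  shows "(\<Sum>j\<in>UNIV. (idm j w - 1 / real CARD('v))^2) = 1 - 1 / real CARD('v)"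
proof -
  define n where "n = real CARD('v)"
  have n: "n > 0" unfolding n_def by simp
  have "(\<Sum>j\<in>UNIV. (idm j w - 1 / n)^2) = (\<Sum>j\<in>UNIV. idm j w * (1 - 2 / n) + 1 / n^2)"
  proof (intro sum.cong refl)
    fix j
    show "(idm j w - 1 / n)^2 = idm j w * (1 - 2 / n) + 1 / n^2"
    proof (cases "j = w")
      case True thus ?thesis using n by (simp add: idm_def power2_eq_square field_simps)
    next
      case False thus ?thesis by (simp add: idm_def power2_eq_square)
    qed
  qed
  also have "\<dots> = (1 - 2 / n) + n * (1 / n^2)"
    by (simp add: sum.distrib sum_distrib_right[symmetric] idm_def n_def)
  also have "\<dots> = 1 - 1 / n" using n by (simp add: field_simps power2_eq_square)
  finally show ?thesis unfolding n_def .
qed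

theorem lemma2p13:
  fixes E :: "('v::finite \<times> 'v) set"
    and M :: "nat \<Rightarrow> ('v \<times> 'v) set"
    and x0 :: "'v \<Rightarrow> int"
    and K :: real and t1 t2 :: nat
  assumes "is_graph E"
    and "\<And>t. is_matching E (M t)"
    and "discrepancy (\<lambda>w. real_of_int (x0 w)) \<le> K"
    and "t1 \<le> t2"
    and "smoothing M K (1 / (2 * real CARD('v))) 0 t1"
  defines "n \<equiv> real CARD('v)"
    and "xbar \<equiv> (\<Sum>w\<in>UNIV. real_of_int (x0 w)) / real CARD('v)"
  shows "(\<forall>k \<delta>. \<delta> > 1 / n \<longrightarrow>
            (let S = (\<Sum>w\<in>UNIV. (Mprod M (Suc t1) t2 w k - 1 / n)^2) in
             measure_pmf.prob (orient_pmf t1)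
               {b. \<bar>(\<Sum>w\<in>UNIV. real_of_int (load M b x0 t1 w) * Mprod M (Suc t1) t2 w k) - xbar\<bar> \<ge> \<delta>}
             \<le> (if S = 0 then 0 else 2 * exp (- ((\<delta> - 1 / (2 * n))^2 / (4 * S))))))
      \<and> (\<forall>w \<delta>. \<delta> > 1 / n \<longrightarrow>
             measure_pmf.prob (orient_pmf t1)
               {b. \<bar>real_of_int (load M b x0 t1 w) - xbar\<bar> \<ge> \<delta>}
             \<le> 2 * exp (- ((\<delta> - 1 / (2 * n))^2 / 4)))"
  unfolding n_def xbar_def
proof (intro conjI allI impI)
  fix k :: 'v and \<delta> :: real
  assume dl: "\<delta> > 1 / real CARD('v)"
  interpret lb E M t2 k x0 by unfold_locales (rule assms(2))
  show "let S = (\<Sum>w\<in>UNIV. (Mprod M (Suc t1) t2 w k - 1 / real CARD('v))^2) in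
             measure_pmf.prob (orient_pmf t1)
               {b. \<bar>(\<Sum>w\<in>UNIV. real_of_int (load M b x0 t1 w) * Mprod M (Suc t1) t2 w k) - (\<Sum>w\<in>UNIV. real_of_int (x0 w)) / real CARD('v)\<bar> \<ge> \<delta>}
             \<le> (if S = 0 then 0 else 2 * exp (- ((\<delta> - 1 / (2 * real CARD('v)))^2 / (4 * S))))"
    using main[OF assms(5) assms(3) assms(4) dl] by (simp add: Let_def)
next
  fix w :: 'v and \<delta> :: real
  assume dl: "\<delta> > 1 / real CARD('v)"
  interpret L2: lb E M t1 w x0 by unfold_locales (rule assms(2))
  define a where "a = \<delta> - 1 / (2 * real CARD('v))"
  define S where "S = 1 - 1 / real CARD('v)"
  have S: "S \<ge> 0" "S \<le> 1" unfolding S_def by (auto simp: field_simps)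
  have sd: "(\<Sum>w'\<in>UNIV. real_of_int (load M b x0 t1 w') * Mprod M (Suc t1) t1 w' w) = real_of_int (load M b x0 t1 w)" for b
    unfolding Mprod_empty idm_def by (rule sum_delta_r)
  have "measure_pmf.prob (orient_pmf t1) {b. \<bar>real_of_int (load M b x0 t1 w) - (\<Sum>w\<in>UNIV. real_of_int (x0 w)) / real CARD('v)\<bar> \<ge> \<delta>}
    \<le> (let S = (\<Sum>j\<in>UNIV. (Mprod M (Suc t1) t1 j w - 1 / real CARD('v))^2) in
         if S = 0 then 0 else 2 * exp (- ((\<delta> - 1 / (2 * real CARD('v)))^2 / (4 * S))))"
    using L2.main[OF assms(5) assms(3) order_refl dl] unfolding sd .
  also have "\<dots> = (if S = 0 then 0 else 2 * exp (- (a^2 / (4 * S))))"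
    unfolding Mprod_empty idm_S a_def S_def Let_def ..
  also have "\<dots> \<le> 2 * exp (- (a^2 / 4))"
  proof (cases "S = 0")
    case False
    hence Sp: "S > 0" using S by simp
    have "a^2 / 4 \<le> a^2 / (4 * S)" using Sp S(2)
      by (intro divide_left_mono) (auto simp: field_simps)
    thus ?thesis using False by simp
  qed simp
  finally show "measure_pmf.prob (orient_pmf t1) {b. \<bar>real_of_int (load M b x0 t1 w) - (\<Sum>w\<in>UNIV. real_of_int (x0 w)) / real CARD('v)\<bar> \<ge> \<delta>}
     \<le> 2 * exp (- ((\<delta> - 1 / (2 * real CARD('v)))^2 / 4))" unfolding a_def .
qed

end
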